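(* There is a universal constant $C>0$ such that for every finite set $\mathcal{W}$ and every probability vector $\mathbf{P}=(P_w)_{w\in\mathcal{W}}$, $$\mathbb{E}_{Y\sim U(0,1)}\big(f_{1,\mathbf{P}}(Y)-1\big)^2\le C\,|\mathcal{W}|\,(1-\max_wP_w),$$ where $f_{1,\mathbf{P}}(r)=\sum_{w:P_w>0}r^{1/P_w-1}$.
   Context: $f_{1,\mathbf{P}}$ is the density on $[0,1]$ of the distribution with CDF $F_{1,\mathbf{P}}(r)=\sum_wP_wr^{1/P_w}$. *)

theory Defs
  imports "HOL-Analysis.Analysis"
begin

definition f1 :: "'a set \<Rightarrow> ('a \<Rightarrow> real) \<Rightarrow> real \<Rightarrow> real" where
  "f1 W P r = (\<Sum>w\<in>{w\<in>W. P w > 0}. r powr (1 / P w - 1))"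

definition prob_vector :: "'a set \<Rightarrow> ('a \<Rightarrow> real) \<Rightarrow> bool" where
  "prob_vector W P \<longleftrightarrow> finite W \<and> (\<forall>w\<in>W. 0 \<le> P w) \<and> (\<Sum>w\<in>W. P w) = 1"

end

theory Submission
  imports Defs
begin

lemma term_cont:
  fixes p :: real assumes "0 < p" "p \<le> 1"
  shows "continuous_on {0..1} (\<lambda>y::real. if p = 1 then 1 else y powr (1 / p - 1))"
proof (cases "p = 1")
  case True then show ?thesis by simp
next
  case False
  then have "p < 1" using assms by simp
  then have "1 / p - 1 > 0" using assms by (simp add: field_simps)
  then have "continuous_on {0..1} (\<lambda>y::real. y powr (1 / p - 1))"
    by (intro continuous_on_powr') (auto intro: continuous_intros)
  with False show ?thesis by simp
qed

lemma sq2: "(a + b)\<^sup>2 \<le> 2 * a\<^sup>2 + 2 * (b::real)\<^sup>2"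
proof -
  have "0 \<le> (a - b)\<^sup>2" by simp
  then show ?thesis by (simp add: power2_eq_square algebra_simps)
qed

lemma term_eq:
  fixes p y :: real assumes "0 < p" "p \<le> 1" "y \<noteq> 0"
  shows "(if p = 1 then 1 else y powr (1 / p - 1)) = y powr (1 / p - 1)"
  using assms by auto

lemma main_bound:
  fixes W :: "nat set" and P :: "nat \<Rightarrow> real"
  assumes pv: "prob_vector W P"
  shows "integral {0..1} (\<lambda>y. (f1 W P y - 1)\<^sup>2) \<le> 4 * real (card W) * (1 - Max (P ` W))"
proof -
  have fin: "finite W" and nn: "\<And>w. w \<in> W \<Longrightarrow> 0 \<le> P w" and s1: "(\<Sum>w\<in>W. P w) = 1"
    using pv by (auto simp: prob_vector_def)
  have ne: "W \<noteq> {}" using s1 by auto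
  define M where "M = Max (P ` W)"
  obtain w0 where w0: "w0 \<in> W" "P w0 = M"
  proof -
    have "M \<in> P ` W" unfolding M_def using fin ne by (intro Max_in) auto
    then show ?thesis using that by blast
  qed
  have Mge: "\<And>w. w \<in> W \<Longrightarrow> P w \<le> M" unfolding M_def using fin by auto
  have le1: "\<And>w. w \<in> W \<Longrightarrow> P w \<le> 1"
    using s1 fin nn member_le_sum[of _ W P] by (metis DiffD1)
  have M1: "M \<le> 1" using le1 w0 by auto
  have Mpos: "M > 0"
  proof (rule ccontr)
    assume "\<not> M > 0"
    then have "(\<Sum>w\<in>W. P w) \<le> (\<Sum>w\<in>W. 0)" using Mge by (intro sum_mono) force
    with s1 show False by simp
  qed
  define S where "S = {w\<in>W. P w > 0}"
  define T where "T = S - {w0}"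
  have finS: "finite S" "finite T" using fin by (auto simp: S_def T_def)
  have w0S: "w0 \<in> S" using w0 Mpos by (auto simp: S_def)
  have sumS: "(\<Sum>w\<in>S. P w) = 1"
  proof -
    have "(\<Sum>w\<in>S. P w) = (\<Sum>w\<in>W. P w)"
      by (rule sum.mono_neutral_left) (use fin nn in \<open>force simp: S_def\<close>)+
    then show ?thesis using s1 by simp
  qed
  have sumT: "(\<Sum>w\<in>T. P w) = 1 - M"
    using sum.remove[OF finS(1) w0S, of P] sumS w0 by (simp add: T_def)
  have Tp: "\<And>w. w \<in> T \<Longrightarrow> 0 < P w \<and> P w \<le> 1" using le1 by (auto simp: T_def S_def)
  have cardT: "card T \<le> card W"
    by (rule card_mono[OF fin]) (auto simp: T_def S_def)
  define a0 where "a0 = 1 / M - 1"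
  have a0: "a0 \<ge> 0" using Mpos M1 by (simp add: a0_def field_simps)
  have fsplit: "f1 W P y = y powr a0 + (\<Sum>w\<in>T. y powr (1 / P w - 1))" for y
    unfolding f1_def S_def[symmetric] a0_def T_def
    using sum.remove[OF finS(1) w0S, of "\<lambda>w. y powr (1 / P w - 1)"] w0 by simp
  define g where "g y = 2 * (1 - y powr a0) + 2 * real (card W) * (\<Sum>w\<in>T. y powr (2 / P w - 2))" for y :: real
  have pw: "(f1 W P y - 1)\<^sup>2 \<le> g y" if y: "y \<in> {0..1}" for y
  proof -
    define x0 where "x0 = y powr a0"
    define B where "B = (\<Sum>w\<in>T. y powr (1 / P w - 1))"
    have x0: "0 \<le> x0" "x0 \<le> 1" using y a0 by (auto simp: x0_def intro!: powr_le1)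
    have e: "f1 W P y - 1 = (x0 - 1) + B" by (simp add: fsplit x0_def B_def)
    have "(f1 W P y - 1)\<^sup>2 = ((x0 - 1) + B)\<^sup>2" by (simp only: e)
    also have "\<dots> \<le> 2 * (x0 - 1)\<^sup>2 + 2 * B\<^sup>2"
      by (rule sq2)
    also have "(x0 - 1)\<^sup>2 \<le> 1 - x0"
    proof -
      have "(1 - x0) * (1 - x0) \<le> (1 - x0) * 1" by (rule mult_left_mono) (use x0 in auto)
      then show ?thesis by (simp add: power2_eq_square algebra_simps)
    qed
    also have "B\<^sup>2 \<le> (\<Sum>w\<in>T. (y powr (1 / P w - 1))\<^sup>2) * card T"
      unfolding B_def by (rule sum_squared_le_sum_of_squares)
    also have "(\<Sum>w\<in>T. (y powr (1 / P w - 1))\<^sup>2) = (\<Sum>w\<in>T. y powr (2 / P w - 2))"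
    proof (rule sum.cong)
      fix w assume "w \<in> T"
      have "(y powr (1 / P w - 1))\<^sup>2 = y powr ((1 / P w - 1) + (1 / P w - 1))"
        by (simp only: power2_eq_square powr_add)
      also have "(1 / P w - 1) + (1 / P w - 1) = 2 / P w - 2" by simp
      finally show "(y powr (1 / P w - 1))\<^sup>2 = y powr (2 / P w - 2)" .
    qed simp
    also have "(\<Sum>w\<in>T. y powr (2 / P w - 2)) * real (card T) \<le> (\<Sum>w\<in>T. y powr (2 / P w - 2)) * real (card W)"
      using cardT by (intro mult_left_mono) (auto intro: sum_nonneg)
    finally show ?thesis by (simp add: g_def x0_def algebra_simps)
  qed
  have ip: "((\<lambda>y::real. y powr c) has_integral (1 / (c + 1))) {0..1}" if "c > -1" for c
    using has_integral_powr_from_0[OF that, of 1] by simp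
  have gint: "(g has_integral (2 * (1 - 1 / (a0 + 1)) + 2 * real (card W) * (\<Sum>w\<in>T. 1 / ((2 / P w - 2) + 1)))) {0..1}"
    unfolding g_def
  proof (intro has_integral_add has_integral_mult_right has_integral_diff has_integral_sum finS)
    show "((\<lambda>x::real. 1::real) has_integral 1) {0..1}"
      using has_integral_const_real[of "1::real" 0 1] by simp
    show "((\<lambda>x. x powr a0) has_integral 1 / (a0 + 1)) {0..1}" using a0 by (intro ip) simp
    fix w assume "w \<in> T"
    then have "2 / P w - 2 \<ge> 0" using Tp[of w] by (simp add: field_simps)
    then show "((\<lambda>x. x powr (2 / P w - 2)) has_integral 1 / (2 / P w - 2 + 1)) {0..1}"
      by (intro ip) simp
  qed
  have a0e: "1 / (a0 + 1) = M" using Mpos by (simp add: a0_def)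
  have te: "1 / ((2 / P w - 2) + 1) \<le> P w" if "w \<in> T" for w
  proof -
    have p: "0 < P w" "P w \<le> 1" using Tp[OF that] by auto
    have "(2 / P w - 2) + 1 = (2 - P w) / P w" using p by (simp add: field_simps)
    then have "1 / ((2 / P w - 2) + 1) = P w / (2 - P w)" by simp
    also have "\<dots> \<le> P w" using p by (simp add: divide_le_eq mult_le_cancel_left1) 
    finally show ?thesis .
  qed
  have Fint: "(\<lambda>y. (f1 W P y - 1)\<^sup>2) integrable_on {0..1}"
  proof -
    define G where "G y = ((\<Sum>w\<in>S. if P w = 1 then 1 else y powr (1 / P w - 1)) - 1)\<^sup>2" for y :: real
    have "continuous_on {0..1} G" unfolding G_def
      by (intro continuous_intros continuous_on_sum term_cont) (use le1 in \<open>auto simp: S_def\<close>)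
    then have Gi: "G integrable_on {0..1}" by (rule integrable_continuous_interval)
    have eq: "(f1 W P y - 1)\<^sup>2 = G y" if "y \<in> {0..1} - {0}" for y
      unfolding G_def f1_def S_def[symmetric]
      using that le1 by (intro arg_cong[where f="\<lambda>z. (z - 1)\<^sup>2"] sum.cong) (auto simp: S_def)
    show ?thesis by (rule integrable_spike_finite[of "{0}", OF _ eq Gi]) auto
  qed
  have "integral {0..1} (\<lambda>y. (f1 W P y - 1)\<^sup>2) \<le> integral {0..1} g"
    by (rule integral_le[OF Fint has_integral_integrable[OF gint] pw])
  also have "integral {0..1} g = 2 * (1 - M) + 2 * real (card W) * (\<Sum>w\<in>T. 1 / ((2 / P w - 2) + 1))"
    using integral_unique[OF gint] a0e by simp
  also have "\<dots> \<le> 2 * (1 - M) + 2 * real (card W) * (1 - M)"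
  proof -
    have "(\<Sum>w\<in>T. 1 / ((2 / P w - 2) + 1)) \<le> (\<Sum>w\<in>T. P w)" by (rule sum_mono) (rule te)
    then have "(\<Sum>w\<in>T. 1 / ((2 / P w - 2) + 1)) \<le> 1 - M" using sumT by simp
    then have "2 * real (card W) * (\<Sum>w\<in>T. 1 / ((2 / P w - 2) + 1)) \<le> 2 * real (card W) * (1 - M)"
      by (rule mult_left_mono) simp
    then show ?thesis by simp
  qed
  also have "\<dots> \<le> 4 * real (card W) * (1 - M)"
  proof -
    have "card W \<ge> 1" using fin ne by (simp add: Suc_le_eq card_gt_0_iff)
    then have n1: "real (card W) \<ge> 1" by simp
    have "1 * (1 - M) \<le> real (card W) * (1 - M)" by (rule mult_right_mono[OF n1]) (use M1 in simp)
    then show ?thesis by (simp add: algebra_simps)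
  qed
  finally show ?thesis by (simp add: M_def)
qed

theorem lemmaA4:
  shows "\<exists>C>0. \<forall>(W :: nat set) (P :: nat \<Rightarrow> real).
           prob_vector W P \<longrightarrow>
           integral {0..1} (\<lambda>y. (f1 W P y - 1)\<^sup>2) \<le> C * real (card W) * (1 - Max (P ` W))"
  by (rule exI[of _ 4]) (auto intro: main_bound)

end
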